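(* There exists a set $\mathcal{A}\subset\mathbb{R}^{n\times n}$ of Lebesgue measure zero such that the following holds. Let $S\subset\mathbb{R}^n$ be a polyhedron, $U_0\subset\mathbb{R}^{n\times n}$ a polyhedron of matrices, $A_\star\in U_0\setminus\mathcal{A}$, and let $F\subseteq S_0^\infty=\{x\in S\mid A^tx\in S\ \forall A\in U_0,\ \forall t\ge1\}$ be a full-dimensional set. If $x$ is drawn at random from $F$ according to any distribution absolutely continuous with respect to Lebesgue measure, then (the trajectory from $x$ is infinite-step safe, and) almost surely the matrix $[x,A_\star x,\dots,A_\star^{n-1}x]$ is invertible, so that $A_\star$ is recovered from the single observed trajectory $x,A_\star x,\dots,A_\star^nx$ as $A_\star=[A_\star x,\dots,A_\star^nx]\,[x,A_\star x,\dots,A_\star^{n-1}x]^{-1}$.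
   Context: Unknown linear system $x_{t+1}=A_\star x_t$; $S_0^\infty$ is the set of initial points whose entire trajectories remain in the safety region $S$ under every matrix in the uncertainty set $U_0$. Full-dimensional means having nonempty interior. *)

theory Defs
  imports "HOL-Probability.Probability"
begin

definition traj :: "real^'n^'n \<Rightarrow> nat \<Rightarrow> real^'n \<Rightarrow> real^'n" where
  "traj A t x = (((*v) A) ^^ t) x"

definition safe_inf :: "(real^'n) set \<Rightarrow> (real^'n^'n) set \<Rightarrow> (real^'n) set" where
  "safe_inf S U0 = {x \<in> S. \<forall>A\<in>U0. \<forall>t::nat. t \<ge> 1 \<longrightarrow> traj A t x \<in> S}"

text \<open>Krylov/trajectory data matrix [A^k x, A^(k+1) x, ..., A^(k+n-1) x];
  column j is A^(k + \<rho> j) x, where \<rho> enumerates the column index type by 0..n-1.\<close>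
definition data_matrix :: "('n \<Rightarrow> nat) \<Rightarrow> real^'n^'n \<Rightarrow> nat \<Rightarrow> real^'n \<Rightarrow> real^'n^'n" where
  "data_matrix \<rho> A k x = (\<chi> i j. traj A (k + \<rho> j) x $ i)"

end

theory Submission
  imports Defs "HOL-Computational_Algebra.Polynomial"
begin


inductive pc :: "'a::euclidean_space set \<Rightarrow> ('a \<Rightarrow> real) \<Rightarrow> bool" for J where
  pc_const: "pc J (\<lambda>_. c)"
| pc_coord: "b \<in> J \<Longrightarrow> pc J (\<lambda>x. x \<bullet> b)"
| pc_add: "pc J f \<Longrightarrow> pc J g \<Longrightarrow> pc J (\<lambda>x. f x + g x)"
| pc_mul: "pc J f \<Longrightarrow> pc J g \<Longrightarrow> pc J (\<lambda>x. f x * g x)"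

lemma pc_sum: "finite S \<Longrightarrow> (\<And>i. i \<in> S \<Longrightarrow> pc J (f i)) \<Longrightarrow> pc J (\<lambda>x. \<Sum>i\<in>S. f i x)"
proof (induction S rule: finite_induct)
  case empty then show ?case using pc_const[of J 0] by simp
next
  case (insert a S) then show ?case by (simp add: pc_add)
qed

lemma pc_prod: "finite S \<Longrightarrow> (\<And>i. i \<in> S \<Longrightarrow> pc J (f i)) \<Longrightarrow> pc J (\<lambda>x. \<Prod>i\<in>S. f i x)"
proof (induction S rule: finite_induct)
  case empty then show ?case using pc_const[of J 1] by simp
next
  case (insert a S) then show ?case by (simp add: pc_mul)
qed

lemma pc_cont: "pc J f \<Longrightarrow> continuous_on UNIV f"
  by (induction rule: pc.induct) (auto intro!: continuous_intros)

lemma pc_empty: "pc {} f \<Longrightarrow> \<exists>c. f = (\<lambda>_. c)"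
  by (induction rule: pc.induct) auto

lemma pc_inv:
  assumes "pc J f" "b \<in> Basis" "J \<subseteq> Basis" "b \<notin> J"
  shows "f (x + s *\<^sub>R b) = f x"
  using assms
proof (induction rule: pc.induct)
  case (pc_coord b')
  then have "b \<bullet> b' = 0" by (metis inner_not_same_Basis subsetD)
  then show ?case by (simp add: inner_add_left)
qed auto

lemma pc_decomp:
  assumes "pc J f"
  shows "\<exists>P. (\<forall>x. f x = poly (P x) (x \<bullet> b)) \<and> (\<forall>k. pc (J - {b}) (\<lambda>x. coeff (P x) k))"
  using assms
proof (induction rule: pc.induct)
  case (pc_const c)
  show ?case
    by (rule exI[of _ "\<lambda>x. [:c:]"]) (auto intro: pc.pc_const)
next
  case (pc_coord b')
  show ?case
  proof (cases "b' = b")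
    case True
    show ?thesis
      by (rule exI[of _ "\<lambda>x. [:0,1:]"]) (auto simp: True intro: pc.pc_const)
  next
    case False
    have "pc (J - {b}) (\<lambda>x. coeff [:x \<bullet> b':] k)" for k
    proof (cases "k = 0")
      case True then show ?thesis using False pc_coord by (auto intro: pc.pc_coord)
    next
      case False then show ?thesis using pc.pc_const[of "J - {b}" 0]
        by (cases k) auto
    qed
    then show ?thesis
      by (intro exI[of _ "\<lambda>x. [:x \<bullet> b':]"]) auto
  qed
next
  case (pc_add f g)
  then obtain P Q where P: "\<forall>x. f x = poly (P x) (x \<bullet> b)" "\<forall>k. pc (J - {b}) (\<lambda>x. coeff (P x) k)"
    and Q: "\<forall>x. g x = poly (Q x) (x \<bullet> b)" "\<forall>k. pc (J - {b}) (\<lambda>x. coeff (Q x) k)" by blast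
  show ?case
    by (rule exI[of _ "\<lambda>x. P x + Q x"]) (auto simp: P Q intro!: pc.pc_add)
next
  case (pc_mul f g)
  then obtain P Q where P: "\<forall>x. f x = poly (P x) (x \<bullet> b)" "\<forall>k. pc (J - {b}) (\<lambda>x. coeff (P x) k)"
    and Q: "\<forall>x. g x = poly (Q x) (x \<bullet> b)" "\<forall>k. pc (J - {b}) (\<lambda>x. coeff (Q x) k)" by blast
  show ?case
    by (rule exI[of _ "\<lambda>x. P x * Q x"]) (auto simp: P Q coeff_mult intro!: pc.pc_mul pc_sum)
qed

lemma pc_mono: "pc J f \<Longrightarrow> J \<subseteq> K \<Longrightarrow> pc K f"
  by (induction rule: pc.induct) (auto intro: pc.intros)



lemma fubini_line_null:
  fixes Z :: "'a::euclidean_space set" and b :: 'a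
  assumes Z: "Z \<in> sets borel" and N: "N \<in> null_sets lborel"
    and sec: "\<And>y. y \<notin> N \<Longrightarrow> {t::real. y + t *\<^sub>R b \<in> Z} \<in> null_sets lborel"
  shows "Z \<in> null_sets lborel"
proof -
  define W where "W = (\<lambda>(y,t). y + t *\<^sub>R b) -` Z"
  have Wm: "W \<in> sets (lborel \<Otimes>\<^sub>M (lborel::real measure))"
  proof -
    have "(\<lambda>(y,t). y + t *\<^sub>R b) \<in> borel_measurable (borel :: ('a \<times> real) measure)"
      by (intro borel_measurable_continuous_onI) (auto intro!: continuous_intros simp: case_prod_unfold)
    then have "W \<in> sets (borel :: ('a \<times> real) measure)"
      using Z measurable_sets[of _ borel borel Z] unfolding W_def by simp
    moreover have "sets (lborel \<Otimes>\<^sub>M (lborel::real measure)) = sets (borel :: ('a \<times> real) measure)"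
      by (simp only: lborel_prod sets_lborel)
    ultimately show ?thesis by simp
  qed
  have "emeasure (lborel \<Otimes>\<^sub>M (lborel::real measure)) W = (\<integral>\<^sup>+y. emeasure lborel (Pair y -` W) \<partial>lborel)"
    by (rule lborel.emeasure_pair_measure_alt[OF Wm])
  also have "\<dots> = (\<integral>\<^sup>+(y::'a). 0 \<partial>lborel)"
  proof -
    have "AE y in lborel. y \<notin> N" using N by (rule AE_not_in)
    then have "AE y in lborel. emeasure lborel (Pair y -` W) = 0"
    proof eventually_elim
      case (elim y)
      have "Pair y -` W = {t. y + t *\<^sub>R b \<in> Z}" by (auto simp: W_def)
      then show ?case using sec[OF elim] by auto
    qed
    then show ?thesis by (rule nn_integral_cong_AE)
  qed
  finally have W0: "emeasure (lborel \<Otimes>\<^sub>M (lborel::real measure)) W = 0" by simp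
  have "emeasure (lborel \<Otimes>\<^sub>M (lborel::real measure)) W = (\<integral>\<^sup>+t. emeasure lborel ((\<lambda>y. (y, t)) -` W) \<partial>lborel)"
    by (rule pair_sigma_finite.emeasure_pair_measure_alt2[OF _ Wm]) (simp add: pair_sigma_finite_def lborel.sigma_finite_measure_axioms)
  also have "\<dots> = (\<integral>\<^sup>+(t::real). emeasure lborel Z \<partial>lborel)"
  proof (rule nn_integral_cong)
    fix t :: real assume "t \<in> space lborel"
    have "(\<lambda>y. (y, t)) -` W = (+) (t *\<^sub>R b) -` Z \<inter> space lborel" by (auto simp: W_def add.commute)
    then have "emeasure lborel ((\<lambda>y. (y, t)) -` W) = emeasure (distr lborel borel ((+) (t *\<^sub>R b))) Z"
      using Z by (subst emeasure_distr) auto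
    then show "emeasure lborel ((\<lambda>y. (y, t)) -` W) = emeasure lborel Z"
      by (simp add: lborel_distr_plus)
  qed
  also have "\<dots> = emeasure lborel Z * emeasure lborel (UNIV :: real set)"
    by (simp add: nn_integral_const)
  finally have "emeasure lborel Z * \<infinity> = 0" using W0 by simp
  then have "emeasure lborel Z = 0"
    using mult_eq_0_iff[of "emeasure lborel Z" "\<infinity>::ennreal"] by simp
  then show ?thesis using Z by (auto simp: null_sets_def)
qed



lemma pc_null:
  fixes J :: "'a::euclidean_space set"
  assumes "finite J" "J \<subseteq> Basis" "pc J f" "f x0 \<noteq> 0"
  shows "{x. f x = 0} \<in> null_sets lborel"
  using assms
proof (induction J arbitrary: f x0 rule: finite_induct)
  case empty
  then obtain c where "f = (\<lambda>_. c)" using pc_empty by blast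
  then show ?case using empty by simp
next
  case (insert b J)
  from pc_decomp[OF insert.prems(2), of b] obtain P where
    P: "\<And>x. f x = poly (P x) (x \<bullet> b)" "\<And>k. pc J (\<lambda>x. coeff (P x) k)"
    using insert.hyps(2) by auto
  have "P x0 \<noteq> 0" using insert.prems(3) P(1)[of x0] by auto
  then obtain k where k: "coeff (P x0) k \<noteq> 0" by (metis leading_coeff_0_iff)
  have N: "{x. coeff (P x) k = 0} \<in> null_sets lborel"
    using insert.IH[OF _ P(2)[of k] k] insert.prems(1) by auto
  have bB: "b \<in> Basis" using insert.prems(1) by auto
  have JB: "J \<subseteq> Basis" using insert.prems(1) by auto
  have Pinv: "P (y + t *\<^sub>R b) = P y" for y t
  proof (rule poly_eqI)
    fix n show "coeff (P (y + t *\<^sub>R b)) n = coeff (P y) n"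
      using pc_inv[OF P(2)[of n] bB JB insert.hyps(2)] .
  qed
  show ?case
  proof (rule fubini_line_null[OF _ N])
    show "{x. f x = 0} \<in> sets borel"
    proof -
      have "continuous_on UNIV f" using pc_cont[OF insert.prems(2)] .
      then have "f \<in> borel_measurable borel" by (rule borel_measurable_continuous_onI)
      then show ?thesis using borel_measurable_vimage[of f borel 0] by (simp add: vimage_def)
    qed
  next
    fix y assume "y \<notin> {x. coeff (P x) k = 0}"
    then have Py: "P y \<noteq> 0" by auto
    have "{t. y + t *\<^sub>R b \<in> {x. f x = 0}} = (\<lambda>r. r - y \<bullet> b) ` {r. poly (P y) r = 0}"
    proof -
      have "f (y + t *\<^sub>R b) = poly (P y) (y \<bullet> b + t)" for t
        using P(1)[of "y + t *\<^sub>R b"] Pinv[of y t] bB by (simp add: inner_add_left)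
      then show ?thesis by (auto simp: image_def)
    qed
    moreover have "finite {r. poly (P y) r = 0}" using poly_roots_finite[OF Py] .
    ultimately show "{t. y + t *\<^sub>R b \<in> {x. f x = 0}} \<in> null_sets lborel"
      by (simp add: finite_imp_null_set_lborel)
  qed
qed



lemma traj_0[simp]: "traj A 0 x = x" by (simp add: traj_def)
lemma traj_Suc: "traj A (Suc k) x = A *v traj A k x" by (simp add: traj_def)

lemma pc_traj_x: "pc (Basis :: (real^'n) set) (\<lambda>x. traj (A::real^'n^'n) k x $ i)"
proof (induction k arbitrary: i)
  case 0
  have "pc (Basis :: (real^'n) set) (\<lambda>x. x \<bullet> axis i 1)" by (rule pc_coord) simp
  then show ?case by (simp add: cart_eq_inner_axis)
next
  case (Suc k)
  have "pc (Basis :: (real^'n) set) (\<lambda>x. \<Sum>j\<in>UNIV. A $ i $ j * traj A k x $ j)"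
    by (rule pc_sum) (auto intro: pc_mul[OF pc_const Suc.IH])
  then show ?case by (simp add: traj_Suc matrix_vector_mult_def)
qed

lemma pc_traj_A: "pc (Basis :: (real^'n^'n) set) (\<lambda>A. traj A k x $ i)"
proof (induction k arbitrary: i)
  case 0
  show ?case by (simp add: pc_const)
next
  case (Suc k)
  have c: "pc (Basis :: (real^'n^'n) set) (\<lambda>A. A $ i $ j)" for j
  proof -
    have "pc (Basis :: (real^'n^'n) set) (\<lambda>A. A \<bullet> axis i (axis j 1))" by (rule pc_coord) simp
    then show ?thesis by (simp add: inner_axis)
  qed
  have "pc (Basis :: (real^'n^'n) set) (\<lambda>A. \<Sum>j\<in>UNIV. A $ i $ j * traj A k x $ j)"
    by (rule pc_sum) (auto intro: pc_mul[OF c Suc.IH])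
  then show ?case by (simp add: traj_Suc matrix_vector_mult_def)
qed

lemma pc_det:
  assumes "\<And>i j. pc J (\<lambda>z. M z $ i $ j)"
  shows "pc J (\<lambda>z. det (M z :: real^'n^'n))"
proof -
  have "pc J (\<lambda>z. \<Sum>p\<in>{p. p permutes (UNIV::'n set)}. of_int (sign p) * (\<Prod>i\<in>UNIV. M z $ i $ p i))"
    by (rule pc_sum[OF finite_permutations]) (auto intro!: pc_mul[OF pc_const] pc_prod assms)
  then show ?thesis by (simp add: det_def)
qed

lemma pc_det_x: "pc (Basis :: (real^'n) set) (\<lambda>x. det (data_matrix \<rho> (A::real^'n^'n) k x))"
  unfolding data_matrix_def by (rule pc_det) (simp add: pc_traj_x)

lemma pc_det_A: "pc (Basis :: (real^'n^'n) set) (\<lambda>A. det (data_matrix \<rho> (A::real^'n^'n) k x))"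
  unfolding data_matrix_def by (rule pc_det) (simp add: pc_traj_A)



lemma shift_traj:
  fixes \<rho>0 :: "'n::finite \<Rightarrow> nat"
  assumes bij: "bij_betw \<rho>0 UNIV {..<CARD('n)}"
  defines "Sh \<equiv> (\<chi> i j. if \<rho>0 i = Suc (\<rho>0 j) then 1 else 0) :: real^'n^'n"
  defines "e0 \<equiv> axis (inv_into UNIV \<rho>0 0) (1::real)"
  shows "k < CARD('n) \<Longrightarrow> traj Sh k e0 = axis (inv_into UNIV \<rho>0 k) 1"
proof (induction k)
  case 0 then show ?case by (simp add: e0_def)
next
  case (Suc k)
  have k: "k \<in> {..<CARD('n)}" "Suc k \<in> {..<CARD('n)}" using Suc.prems by auto
  have r: "\<rho>0 (inv_into UNIV \<rho>0 k) = k" "\<rho>0 (inv_into UNIV \<rho>0 (Suc k)) = Suc k"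
    using k bij by (auto simp: bij_betw_def f_inv_into_f)
  have "i = inv_into UNIV \<rho>0 (Suc k) \<longleftrightarrow> \<rho>0 i = Suc k" for i
    using r(2) bij by (metis bij_betw_def inj_on_def UNIV_I)
  note iff = this
  have IH: "traj Sh k e0 = axis (inv_into UNIV \<rho>0 k) 1" using Suc by simp
  have "traj Sh (Suc k) e0 = column (inv_into UNIV \<rho>0 k) Sh"
    unfolding traj_Suc IH by (rule matrix_vector_mult_basis)
  also have "\<dots> = axis (inv_into UNIV \<rho>0 (Suc k)) 1"
    unfolding column_def Sh_def vec_eq_iff using iff r(1) by (auto simp: axis_def)
  finally show ?case .
qed

lemma exists_shift:
  fixes \<rho>0 :: "'n::finite \<Rightarrow> nat"
  assumes bij: "bij_betw \<rho>0 UNIV {..<CARD('n)}"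
  shows "\<exists>Sh::real^'n^'n. det (data_matrix \<rho>0 Sh 0 (axis (inv_into UNIV \<rho>0 0) 1)) \<noteq> 0"
proof -
  let ?Sh = "(\<chi> i j. if \<rho>0 i = Suc (\<rho>0 j) then 1 else 0) :: real^'n^'n"
  have "data_matrix \<rho>0 ?Sh 0 (axis (inv_into UNIV \<rho>0 0) 1) = mat 1"
  proof -
    have "\<rho>0 j < CARD('n)" for j using bij by (auto simp: bij_betw_def)
    moreover have "inv_into UNIV \<rho>0 (\<rho>0 j) = j" for j using bij by (auto simp: bij_betw_def)
    ultimately show ?thesis
      using shift_traj[OF bij] by (simp add: data_matrix_def vec_eq_iff mat_def axis_def)
  qed
  then show ?thesis by (intro exI[of _ ?Sh]) simp
qed



lemma perm_det:
  fixes \<rho> \<rho>0 :: "'n::finite \<Rightarrow> nat"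
  assumes b: "bij_betw \<rho> UNIV {..<CARD('n)}" and b0: "bij_betw \<rho>0 UNIV {..<CARD('n)}"
  shows "det (data_matrix \<rho> A k x) = of_int (sign (inv_into UNIV \<rho>0 \<circ> \<rho>)) * det (data_matrix \<rho>0 A k x)"
proof -
  let ?s = "inv_into UNIV \<rho>0 \<circ> \<rho>"
  have "bij_betw (inv_into UNIV \<rho>0) {..<CARD('n)} UNIV"
    using b0 by (metis bij_betw_inv_into)
  then have "bij_betw ?s UNIV UNIV" using b by (rule bij_betw_trans[rotated])
  then have p: "?s permutes UNIV" by (rule bij_imp_permutes) simp
  have e: "\<rho>0 (?s j) = \<rho> j" for j
  proof -
    have "\<rho> j \<in> range \<rho>0" using b b0 by (auto simp: bij_betw_def)
    then show ?thesis by (simp add: f_inv_into_f)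
  qed
  have "data_matrix \<rho> A k x = (\<chi> i j. data_matrix \<rho>0 A k x $ i $ ?s j)"
    by (simp add: data_matrix_def e del: comp_apply)
  then show ?thesis using det_permute_columns[OF p] by simp
qed

lemma data_matrix_shift: "A ** data_matrix \<rho> A 0 x = data_matrix \<rho> A 1 x"
  by (simp add: data_matrix_def vec_eq_iff matrix_matrix_mult_def traj_Suc matrix_vector_mult_def)



theorem theorem23:
  "\<exists>\<A> :: (real^'n^'n) set. \<A> \<in> null_sets lborel \<and>
    (\<forall>(S :: (real^'n) set) (U0 :: (real^'n^'n) set) (Astar :: real^'n^'n)
        (F :: (real^'n) set) (P :: (real^'n) measure) (\<rho> :: 'n \<Rightarrow> nat).
      polyhedron S \<longrightarrow> polyhedron U0 \<longrightarrow> Astar \<in> U0 - \<A> \<longrightarrow>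
      F \<subseteq> safe_inf S U0 \<longrightarrow> interior F \<noteq> {} \<longrightarrow>
      prob_space P \<longrightarrow> sets P = sets lborel \<longrightarrow> absolutely_continuous lborel P \<longrightarrow>
      (AE x in P. x \<in> F) \<longrightarrow>
      bij_betw \<rho> UNIV {..<CARD('n)} \<longrightarrow>
      (AE x in P. x \<in> safe_inf S U0 \<and>
                  invertible (data_matrix \<rho> Astar 0 x) \<and>
                  Astar = data_matrix \<rho> Astar 1 x ** matrix_inv (data_matrix \<rho> Astar 0 x)))"
proof -
  obtain h where "bij_betw h {0..<CARD('n)} (UNIV::'n set)"
    using ex_bij_betw_nat_finite[of "UNIV::'n set"] by auto
  then have b0: "bij_betw (inv_into {0..<CARD('n)} h) UNIV {..<CARD('n)}"
    using bij_betw_inv_into by (metis atLeast0LessThan)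
  define \<rho>0 where "\<rho>0 = inv_into {0..<CARD('n)} h"
  note b0 = b0[folded \<rho>0_def]
  define e0 :: "real^'n" where "e0 = axis (inv_into UNIV \<rho>0 0) 1"
  define \<A> :: "(real^'n^'n) set" where "\<A> = {A. det (data_matrix \<rho>0 A 0 e0) = 0}"
  obtain Sh :: "real^'n^'n" where Sh: "det (data_matrix \<rho>0 Sh 0 e0) \<noteq> 0"
    using exists_shift[OF b0] unfolding e0_def by blast
  have null: "\<A> \<in> null_sets lborel"
    unfolding \<A>_def by (rule pc_null[OF _ _ pc_det_A Sh]) auto
  show ?thesis
  proof (intro exI[of _ \<A>] conjI null allI impI)
    fix S U0 Astar F P and \<rho> :: "'n \<Rightarrow> nat"
    assume As: "Astar \<in> U0 - \<A>" and FS: "F \<subseteq> safe_inf S U0"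
      and sP: "sets P = sets lborel" and ac: "absolutely_continuous lborel P"
      and AEF: "AE x in P. x \<in> F" and b: "bij_betw \<rho> UNIV {..<CARD('n)}"
    have ne: "det (data_matrix \<rho>0 Astar 0 e0) \<noteq> 0" using As unfolding \<A>_def by auto
    have Z: "{x. det (data_matrix \<rho>0 Astar 0 x) = 0} \<in> null_sets lborel"
      by (rule pc_null[OF _ _ pc_det_x ne]) auto
    then have ZP: "{x. det (data_matrix \<rho>0 Astar 0 x) = 0} \<in> null_sets P"
      using ac unfolding absolutely_continuous_def by auto
    have "AE x in P. det (data_matrix \<rho>0 Astar 0 x) \<noteq> 0"
      by (rule AE_I'[OF ZP]) auto
    with AEF show "AE x in P. x \<in> safe_inf S U0 \<and>
                  invertible (data_matrix \<rho> Astar 0 x) \<and>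
                  Astar = data_matrix \<rho> Astar 1 x ** matrix_inv (data_matrix \<rho> Astar 0 x)"
    proof eventually_elim
      case (elim x)
      let ?K = "data_matrix \<rho> Astar 0 x"
      have "det ?K \<noteq> 0" using elim(2) perm_det[OF b b0, of Astar 0 x] by simp
      then have inv: "invertible ?K" by (simp add: invertible_det_nz)
      then have "?K ** matrix_inv ?K = mat 1"
        unfolding invertible_def matrix_inv_def by (rule someI2_ex) auto
      then have "data_matrix \<rho> Astar 1 x ** matrix_inv ?K = Astar"
        by (metis data_matrix_shift matrix_mul_assoc matrix_mul_rid)
      then show ?case using elim(1) FS inv by auto
    qed
  qed
qed


end
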